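(* Let $\eta>0$, $n\ge1$, $b\in\{1,\dots,n\}$. Let $X_n=(x_1,\dots,x_n)$ and $\hat X_n=(\hat x_1,\dots,\hat x_n)$ with $x_i=(a_i,y_i)$, $\hat x_i=(\hat a_i,\hat y_i)\in\mathcal{X}\subseteq\mathbb{R}^d\times\mathbb{R}$, differing in at most one index, and assume $\sup_{x\in\mathcal{X}}\Vert x\Vert\le D<\infty$. Let $(\Omega_k)_{k\ge1}$ be i.i.d. uniformly random subsets of $\{1,\dots,n\}$ of cardinality $b$, $H_k=\sum_{i\in\Omega_k}a_ia_i^\top$, $q_k=\sum_{i\in\Omega_k}a_iy_i$, $\hat H_k=\sum_{i\in\Omega_k}\hat a_i\hat a_i^\top$, $\hat q_k=\sum_{i\in\Omega_k}\hat a_i\hat y_i$, and consider $$\theta_k=\left(I-\tfrac{\eta}{b}H_k\right)\theta_{k-1}+\tfrac{\eta}{b}q_k,\qquad\hat\theta_k=\left(I-\tfrac{\eta}{b}\hat H_k\right)\hat\theta_{k-1}+\tfrac{\eta}{b}\hat q_k,$$ with $\theta_0=\hat\theta_0=\theta\in\mathbb{R}^d$. Assume $\rho:=\mathbb{E}\Vert I-\frac{\eta}{b}H_1\Vert<1$ and $\hat\rho:=\mathbb{E}\Vert I-\frac{\eta}{b}\hat H_1\Vert<1$. Let $\nu_k,\hat\nu_k$ be the laws of $\theta_k,\hat\theta_k$. Then for every $k$, $$\mathcal{W}_1(\nu_k,\hat\nu_k)\le\frac{1-\rho^k}{1-\rho}\cdot\frac{2\eta D^2}{n}\max\left\{1+\Vert\theta\Vert,\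 \frac{1-\hat\rho+\frac{\eta}{b}\mathbb{E}\Vert\hat q_1\Vert}{1-\hat\rho}\right\}.$$
   Context: This is minibatch SGD for the quadratic loss $f(\theta,(a,y))=(a^\top\theta-y)^2/2$ on two datasets differing in at most one point. Matrix norms are operator norms; $\mathcal{W}_1$ is the 1-Wasserstein distance. *)

theory Defs
  imports "HOL-Analysis.Analysis" "HOL-Probability.Probability"
begin

text \<open>Minibatches: subsets of the index set {0..<n} of cardinality b
  (indices are 0-based here).\<close>
definition batches :: "nat \<Rightarrow> nat \<Rightarrow> nat set set" where
  "batches n b = {S. S \<subseteq> {..<n} \<and> card S = b}"

definition outer :: "real^'d \<Rightarrow> real^'d^'d" where
  "outer a = (\<chi> i j. a $ i * a $ j)"

definition Hmat :: "(nat \<Rightarrow> (real^'d) \<times> real) \<Rightarrow> nat set \<Rightarrow> real^'d^'d" where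
  "Hmat X S = (\<Sum>i\<in>S. outer (fst (X i)))"

definition qvec :: "(nat \<Rightarrow> (real^'d) \<times> real) \<Rightarrow> nat set \<Rightarrow> real^'d" where
  "qvec X S = (\<Sum>i\<in>S. snd (X i) *\<^sub>R fst (X i))"

definition sgd_step :: "real \<Rightarrow> nat \<Rightarrow> (nat \<Rightarrow> (real^'d) \<times> real) \<Rightarrow> nat set \<Rightarrow> real^'d \<Rightarrow> real^'d" where
  "sgd_step \<eta> b X S t =
     (mat 1 - (\<eta> / real b) *\<^sub>R Hmat X S) *v t + (\<eta> / real b) *\<^sub>R qvec X S"

text \<open>Law of theta_k: batches are i.i.d. uniform over b-subsets and independent
  of the past, so the law evolves as a Markov chain.\<close>
fun sgd_law :: "real \<Rightarrow> nat \<Rightarrow> nat \<Rightarrow> (nat \<Rightarrow> (real^'d) \<times> real) \<Rightarrow> real^'d \<Rightarrow> nat \<Rightarrow> (real^'d) pmf" where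
  "sgd_law \<eta> n b X \<theta> 0 = return_pmf \<theta>"
| "sgd_law \<eta> n b X \<theta> (Suc k) =
     bind_pmf (sgd_law \<eta> n b X \<theta> k)
       (\<lambda>t. map_pmf (\<lambda>S. sgd_step \<eta> b X S t) (pmf_of_set (batches n b)))"

definition wasserstein1 :: "'a::metric_space pmf \<Rightarrow> 'a pmf \<Rightarrow> real" where
  "wasserstein1 p q = Inf {measure_pmf.expectation c (\<lambda>(x, y). dist x y) | c.
      map_pmf fst c = p \<and> map_pmf snd c = q}"

end

theory Submission
  imports Defs
begin

lemma exp_bind:
  fixes h :: "'b \<Rightarrow> real"
  assumes "finite (set_pmf p)" "\<And>x. x \<in> set_pmf p \<Longrightarrow> finite (set_pmf (f x))"
  shows "measure_pmf.expectation (p \<bind> f) h = measure_pmf.expectation p (\<lambda>a. measure_pmf.expectation (f a) h)"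
  apply (subst pmf_expectation_bind[of "set_pmf p"])
  using assms apply auto[3]
  apply (subst integral_measure_pmf[of "set_pmf p"])
  using assms by auto

lemma batches_finite: "finite (batches n b)"
  unfolding batches_def by (rule finite_subset[of _ "Pow {..<n}"]) auto

lemma batches_ne: "b \<le> n \<Longrightarrow> batches n b \<noteq> {}"
  unfolding batches_def by (rule ex_in_conv[THEN iffD1], rule exI[of _ "{..<b}"]) auto

lemma card_batches: "card (batches n b) = n choose b"
  unfolding batches_def using n_subsets[of "{..<n}" b] by simp

lemma card_batches_notin:
  assumes "j < n"
  shows "card {S \<in> batches n b. j \<notin> S} = (n - 1) choose b"
proof -
  have "{S \<in> batches n b. j \<notin> S} = {S. S \<subseteq> {..<n} - {j} \<and> card S = b}"
    unfolding batches_def by auto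
  moreover have "card ({..<n} - {j}) = n - 1" using assms by simp
  ultimately show ?thesis using n_subsets[of "{..<n} - {j}" b] by simp
qed

lemma card_batches_in:
  assumes "j < n" "b \<le> n"
  shows "real (card {S \<in> batches n b. j \<in> S}) = real b / real n * real (card (batches n b))"
proof -
  have fin: "finite (batches n b)" by (rule batches_finite)
  have u: "batches n b = {S \<in> batches n b. j \<in> S} \<union> {S \<in> batches n b. j \<notin> S}" by auto
  have "card {S \<in> batches n b. j \<in> S} + card {S \<in> batches n b. j \<notin> S} = card (batches n b)"
    apply (subst (3) u)
    apply (rule card_Un_disjoint[symmetric])
    using fin by auto
  then have e: "real (card {S \<in> batches n b. j \<in> S}) = real (n choose b) - real ((n - 1) choose b)"
    using card_batches_notin[OF assms(1)] card_batches[of n b] by (metis add_diff_cancel_right' of_nat_add diff_add_cancel)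
  have "real (n - b) * real (n choose b) = real n * real ((n - 1) choose b)"
    using binomial_absorb_comp[of n b] by (metis of_nat_mult)
  then have "real ((n - 1) choose b) = (real n - real b) / real n * real (n choose b)"
    using assms by (simp add: of_nat_diff field_simps)
  then have h: "real b * real (n choose b) + real n * real ((n - 1) choose b) = real n * real (n choose b)"
    using assms by (simp add: field_simps)
  have "real n * (real (n choose b) - real ((n - 1) choose b)) = real b * real (n choose b)"
    using h by (simp add: right_diff_distrib)
  then have h2: "(real (n choose b) - real ((n - 1) choose b)) * real n = real b * real (n choose b)"
    by (simp add: mult.commute)
  have n0: "real n > 0" using assms by simp
  have "real (card {S \<in> batches n b. j \<in> S}) = real (n choose b) - real ((n - 1) choose b)" using e .
  also have "\<dots> = real b * real (n choose b) / real n" using h2 n0 by (simp add: eq_divide_eq)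
  finally show ?thesis using card_batches[of n b] by simp
qed

lemma exp_batch_sum:
  fixes g :: "nat \<Rightarrow> real"
  assumes "b \<le> n"
  shows "measure_pmf.expectation (pmf_of_set (batches n b)) (\<lambda>S. \<Sum>i\<in>S. g i)
       = real b / real n * (\<Sum>i<n. g i)"
proof -
  let ?B = "batches n b"
  have fin: "finite ?B" by (rule batches_finite)
  have "(\<Sum>S\<in>?B. \<Sum>i\<in>S. g i) = (\<Sum>S\<in>?B. \<Sum>i<n. if i \<in> S then g i else 0)"
  proof (rule sum.cong[OF refl])
    fix S assume "S \<in> ?B" then have "S \<subseteq> {..<n}" by (simp add: batches_def)
    then show "(\<Sum>i\<in>S. g i) = (\<Sum>i<n. if i \<in> S then g i else 0)"
      by (simp add: sum.If_cases Int_absorb1 inf.absorb2)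
  qed
  also have "\<dots> = (\<Sum>i<n. \<Sum>S\<in>?B. if i \<in> S then g i else 0)" by (rule sum.swap)
  also have "\<dots> = (\<Sum>i<n. g i * real (card {S \<in> ?B. i \<in> S}))"
    by (rule sum.cong[OF refl]) (simp add: sum.If_cases fin Int_def)
  also have "\<dots> = (\<Sum>i<n. g i * (real b / real n * real (card ?B)))"
    using card_batches_in assms by simp
  finally have "(\<Sum>S\<in>?B. \<Sum>i\<in>S. g i) = real b / real n * (\<Sum>i<n. g i) * real (card ?B)"
    by (simp add: sum_distrib_left sum_distrib_right sum_divide_distrib mult_ac)
  moreover have "card ?B > 0" using fin batches_ne[OF assms] card_gt_0_iff by blast
  ultimately show ?thesis
    using integral_pmf_of_set[OF batches_ne[OF assms] fin] by simp
qed

lemma outer_mult: "outer a *v s = (a \<bullet> s) *\<^sub>R a"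
  by (simp add: vec_eq_iff outer_def matrix_vector_mult_def inner_vec_def sum_distrib_left mult_ac)

lemma outer_norm: "norm (outer a *v s) \<le> (norm a)\<^sup>2 * norm s"
proof -
  have "norm (outer a *v s) = \<bar>a \<bullet> s\<bar> * norm a" by (simp add: outer_mult)
  also have "\<dots> \<le> norm a * norm s * norm a"
    by (simp add: Cauchy_Schwarz_ineq2 mult_right_mono)
  finally show ?thesis by (simp add: power2_eq_square mult_ac)
qed

lemma sum_mat_mult: "finite S \<Longrightarrow> (\<Sum>i\<in>S. M i) *v s = (\<Sum>i\<in>S. M i *v s)"
  by (induction S rule: finite_induct) (simp_all add: matrix_vector_mult_add_rdistrib)


lemma fin_B: "b \<le> n \<Longrightarrow> finite (set_pmf (pmf_of_set (batches n b)))"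
  using batches_finite batches_ne by simp

lemma intB: "b \<le> n \<Longrightarrow> integrable (measure_pmf (pmf_of_set (batches n b))) (f :: _ \<Rightarrow> real)"
  by (rule integrable_measure_pmf_finite[OF fin_B])

lemma step_expand:
  "sgd_step \<eta> b X S t = (mat 1 - (\<eta> / real b) *\<^sub>R Hmat X S) *v t + (\<eta> / real b) *\<^sub>R qvec X S"
  by (simp add: sgd_step_def)

lemma step_diff:
  "sgd_step \<eta> b X S t - sgd_step \<eta> b Xh S s =
     (mat 1 - (\<eta> / real b) *\<^sub>R Hmat X S) *v (t - s)
     + (\<eta> / real b) *\<^sub>R ((Hmat Xh S - Hmat X S) *v s + (qvec X S - qvec Xh S))"
  by (simp add: sgd_step_def matrix_vector_mult_diff_rdistrib matrix_vector_mult_diff_distrib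
       scaleR_matrix_vector_assoc[symmetric] algebra_simps)

lemma step_norm_bound:
  assumes "\<eta> > 0" "1 \<le> b" "b \<le> n"
  shows "measure_pmf.expectation (pmf_of_set (batches n b)) (\<lambda>S. norm (sgd_step \<eta> b Xh S s))
    \<le> measure_pmf.expectation (pmf_of_set (batches n b))
               (\<lambda>S. onorm (\<lambda>v. (mat 1 - (\<eta> / real b) *\<^sub>R Hmat Xh S) *v v)) * norm s
      + \<eta> / real b * measure_pmf.expectation (pmf_of_set (batches n b)) (\<lambda>S. norm (qvec Xh S))"
proof -
  let ?B = "pmf_of_set (batches n b)"
  have c0: "\<eta> / real b \<ge> 0" using assms by simp
  have pw: "norm (sgd_step \<eta> b Xh S s) \<le> onorm (\<lambda>v. (mat 1 - (\<eta> / real b) *\<^sub>R Hmat Xh S) *v v) * norm s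
      + \<eta> / real b * norm (qvec Xh S)" for S
  proof -
    have "norm (sgd_step \<eta> b Xh S s) \<le> norm ((mat 1 - (\<eta> / real b) *\<^sub>R Hmat Xh S) *v s) + norm ((\<eta> / real b) *\<^sub>R qvec Xh S)"
      unfolding step_expand by (rule norm_triangle_ineq)
    moreover have "norm ((mat 1 - (\<eta> / real b) *\<^sub>R Hmat Xh S) *v s) \<le> onorm (\<lambda>v. (mat 1 - (\<eta> / real b) *\<^sub>R Hmat Xh S) *v v) * norm s"
      using onorm[OF matrix_vector_mul_bounded_linear] by blast
    moreover have "norm ((\<eta> / real b) *\<^sub>R qvec Xh S) = \<eta> / real b * norm (qvec Xh S)" 
      by (simp only: norm_scaleR abs_of_nonneg[OF c0])
    ultimately show ?thesis by linarith
  qed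
  have "measure_pmf.expectation ?B (\<lambda>S. norm (sgd_step \<eta> b Xh S s))
     \<le> measure_pmf.expectation ?B (\<lambda>S. onorm (\<lambda>v. (mat 1 - (\<eta> / real b) *\<^sub>R Hmat Xh S) *v v) * norm s
      + \<eta> / real b * norm (qvec Xh S))"
    by (rule integral_mono[OF intB[OF assms(3)] intB[OF assms(3)] pw])
  also have "\<dots> = measure_pmf.expectation ?B (\<lambda>S. onorm (\<lambda>v. (mat 1 - (\<eta> / real b) *\<^sub>R Hmat Xh S) *v v)) * norm s
      + \<eta> / real b * measure_pmf.expectation ?B (\<lambda>S. norm (qvec Xh S))"
    by (subst Bochner_Integration.integral_add[OF intB[OF assms(3)] intB[OF assms(3)]]) simp
  finally show ?thesis .
qed

lemma step_diff_bound:
  assumes "\<eta> > 0" "1 \<le> b" "b \<le> n"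
    and J: "card {i \<in> {..<n}. X i \<noteq> Xh i} \<le> 1"
    and bnd: "\<forall>i<n. norm (X i) \<le> D \<and> norm (Xh i) \<le> D"
  shows "measure_pmf.expectation (pmf_of_set (batches n b)) (\<lambda>S. dist (sgd_step \<eta> b X S t) (sgd_step \<eta> b Xh S s))
    \<le> measure_pmf.expectation (pmf_of_set (batches n b))
               (\<lambda>S. onorm (\<lambda>v. (mat 1 - (\<eta> / real b) *\<^sub>R Hmat X S) *v v)) * norm (t - s)
      + 2 * \<eta> * D\<^sup>2 / real n * (1 + norm s)"
proof -
  let ?B = "pmf_of_set (batches n b)"
  let ?J = "{i \<in> {..<n}. X i \<noteq> Xh i}"
  let ?c = "\<eta> / real b"
  define g where "g i = norm ((outer (fst (Xh i)) - outer (fst (X i))) *v s)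
      + norm (snd (X i) *\<^sub>R fst (X i) - snd (Xh i) *\<^sub>R fst (Xh i))" for i
  have c0: "?c \<ge> 0" using assms by simp
  have pw: "dist (sgd_step \<eta> b X S t) (sgd_step \<eta> b Xh S s) \<le>
      onorm (\<lambda>v. (mat 1 - ?c *\<^sub>R Hmat X S) *v v) * norm (t - s) + ?c * (\<Sum>i\<in>S. g i)"
    if "S \<in> batches n b" for S
  proof -
    have fS: "finite S" using that unfolding batches_def by (auto intro: finite_subset)
    have e1: "(Hmat Xh S - Hmat X S) *v s = (\<Sum>i\<in>S. (outer (fst (Xh i)) - outer (fst (X i))) *v s)"
      unfolding Hmat_def by (simp add: sum_subtractf[symmetric] sum_mat_mult[OF fS])
    have e2: "qvec X S - qvec Xh S = (\<Sum>i\<in>S. snd (X i) *\<^sub>R fst (X i) - snd (Xh i) *\<^sub>R fst (Xh i))"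
      unfolding qvec_def by (simp add: sum_subtractf)
    have ha: "norm ((Hmat Xh S - Hmat X S) *v s + (qvec X S - qvec Xh S)) \<le> (\<Sum>i\<in>S. g i)"
    proof -
      have "norm ((Hmat Xh S - Hmat X S) *v s + (qvec X S - qvec Xh S))
          \<le> norm ((Hmat Xh S - Hmat X S) *v s) + norm (qvec X S - qvec Xh S)" by (rule norm_triangle_ineq)
      also have "\<dots> \<le> (\<Sum>i\<in>S. norm ((outer (fst (Xh i)) - outer (fst (X i))) *v s))
          + (\<Sum>i\<in>S. norm (snd (X i) *\<^sub>R fst (X i) - snd (Xh i) *\<^sub>R fst (Xh i)))"
        unfolding e1 e2 by (intro add_mono norm_sum)
      finally show ?thesis by (simp add: g_def sum.distrib)
    qed
    moreover have "norm ((mat 1 - ?c *\<^sub>R Hmat X S) *v (t - s)) \<le> onorm (\<lambda>v. (mat 1 - ?c *\<^sub>R Hmat X S) *v v) * norm (t - s)"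
      using onorm[OF matrix_vector_mul_bounded_linear] by blast
    moreover have "norm (?c *\<^sub>R ((Hmat Xh S - Hmat X S) *v s + (qvec X S - qvec Xh S)))
       = ?c * norm ((Hmat Xh S - Hmat X S) *v s + (qvec X S - qvec Xh S))"
      by (simp only: norm_scaleR abs_of_nonneg[OF c0])
    moreover have "norm ((mat 1 - ?c *\<^sub>R Hmat X S) *v (t - s) + ?c *\<^sub>R ((Hmat Xh S - Hmat X S) *v s + (qvec X S - qvec Xh S)))
       \<le> norm ((mat 1 - ?c *\<^sub>R Hmat X S) *v (t - s)) + norm (?c *\<^sub>R ((Hmat Xh S - Hmat X S) *v s + (qvec X S - qvec Xh S)))"
      by (rule norm_triangle_ineq)
    ultimately have "norm ((mat 1 - ?c *\<^sub>R Hmat X S) *v (t - s) + ?c *\<^sub>R ((Hmat Xh S - Hmat X S) *v s + (qvec X S - qvec Xh S)))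
       \<le> onorm (\<lambda>v. (mat 1 - ?c *\<^sub>R Hmat X S) *v v) * norm (t - s) + ?c * (\<Sum>i\<in>S. g i)"
      using mult_left_mono[OF ha c0] by linarith
    then show ?thesis unfolding dist_norm step_diff .
  qed
  have gb: "g i \<le> 2 * D\<^sup>2 * (1 + norm s)" if "i < n" for i
  proof -
    obtain a y where X: "X i = (a, y)" by fastforce
    obtain ah yh where Xh: "Xh i = (ah, yh)" by fastforce
    have na: "norm a \<le> D" "\<bar>y\<bar> \<le> D" "norm ah \<le> D" "\<bar>yh\<bar> \<le> D"
    proof -
      have p: "norm a \<le> norm (a,y)" "norm y \<le> norm (a,y)" "norm ah \<le> norm (ah,yh)" "norm yh \<le> norm (ah,yh)"
        by (rule norm_fst_le norm_snd_le)+
      have "norm (a,y) \<le> D" "norm (ah,yh) \<le> D" using bnd that X Xh by metis+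
      then show "norm a \<le> D" "\<bar>y\<bar> \<le> D" "norm ah \<le> D" "\<bar>yh\<bar> \<le> D"
        using p by (simp_all del: norm_Pair)
    qed
    have D0: "D \<ge> 0" using na by simp
    have "norm ((outer ah - outer a) *v s) \<le> (norm ah)\<^sup>2 * norm s + (norm a)\<^sup>2 * norm s"
      unfolding matrix_vector_mult_diff_rdistrib
      using norm_triangle_ineq4[of "outer ah *v s" "outer a *v s"] outer_norm[of ah s] outer_norm[of a s] by linarith
    also have "\<dots> \<le> D\<^sup>2 * norm s + D\<^sup>2 * norm s"
      using na by (intro add_mono mult_right_mono power_mono) auto
    finally have h1: "norm ((outer ah - outer a) *v s) \<le> 2 * D\<^sup>2 * norm s" by (simp add: mult_ac)
    have "norm (y *\<^sub>R a - yh *\<^sub>R ah) \<le> \<bar>y\<bar> * norm a + \<bar>yh\<bar> * norm ah"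
      using norm_triangle_ineq4[of "y *\<^sub>R a" "yh *\<^sub>R ah"] by simp
    also have "\<dots> \<le> D * D + D * D" using na D0 by (intro add_mono mult_mono) auto
    finally have h2: "norm (y *\<^sub>R a - yh *\<^sub>R ah) \<le> 2 * D\<^sup>2" by (simp add: power2_eq_square)
    show ?thesis using h1 h2 unfolding g_def X Xh by (simp add: algebra_simps)
  qed
  have sumg: "(\<Sum>i<n. g i) \<le> 2 * D\<^sup>2 * (1 + norm s)"
  proof -
    have "(\<Sum>i\<in>?J. g i) = (\<Sum>i<n. g i)"
    proof (rule sum.mono_neutral_left)
      show "\<forall>i\<in>{..<n} - ?J. g i = 0"
      proof
        fix i assume "i \<in> {..<n} - ?J"
        then have "X i = Xh i" by auto
        then show "g i = 0" by (simp add: g_def)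
      qed
    qed auto
    then have "(\<Sum>i<n. g i) = (\<Sum>i\<in>?J. g i)" by simp
    also have "\<dots> \<le> (\<Sum>i\<in>?J. 2 * D\<^sup>2 * (1 + norm s))" by (rule sum_mono) (simp add: gb)
    also have "\<dots> = real (card ?J) * (2 * D\<^sup>2 * (1 + norm s))" by simp
    also have "\<dots> \<le> 1 * (2 * D\<^sup>2 * (1 + norm s))"
      using J by (intro mult_right_mono) auto
    finally show ?thesis by simp
  qed
  have "measure_pmf.expectation ?B (\<lambda>S. dist (sgd_step \<eta> b X S t) (sgd_step \<eta> b Xh S s))
     \<le> measure_pmf.expectation ?B (\<lambda>S. onorm (\<lambda>v. (mat 1 - ?c *\<^sub>R Hmat X S) *v v) * norm (t - s) + ?c * (\<Sum>i\<in>S. g i))"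
    by (rule integral_mono_AE[OF intB[OF assms(3)] intB[OF assms(3)]])
       (use pw batches_finite batches_ne[OF assms(3)] in \<open>auto simp: AE_measure_pmf_iff\<close>)
  also have "\<dots> = measure_pmf.expectation ?B (\<lambda>S. onorm (\<lambda>v. (mat 1 - ?c *\<^sub>R Hmat X S) *v v)) * norm (t - s)
      + ?c * (real b / real n * (\<Sum>i<n. g i))"
    by (subst Bochner_Integration.integral_add[OF intB[OF assms(3)] intB[OF assms(3)]]) (simp add: exp_batch_sum[OF assms(3)])
  also have "\<dots> \<le> measure_pmf.expectation ?B (\<lambda>S. onorm (\<lambda>v. (mat 1 - ?c *\<^sub>R Hmat X S) *v v)) * norm (t - s)
      + 2 * \<eta> * D\<^sup>2 / real n * (1 + norm s)"
  proof -
    have "?c * (real b / real n * (\<Sum>i<n. g i)) = \<eta> / real n * (\<Sum>i<n. g i)"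
      using assms by simp
    also have "\<eta> / real n * (\<Sum>i<n. g i) \<le> \<eta> / real n * (2 * D\<^sup>2 * (1 + norm s))"
      using sumg assms by (intro mult_left_mono) auto
    also have "\<eta> / real n * (2 * D\<^sup>2 * (1 + norm s)) = 2 * \<eta> * D\<^sup>2 / real n * (1 + norm s)"
      by simp
    finally show ?thesis by simp
  qed
  finally show ?thesis .
qed


fun cpl :: "real \<Rightarrow> nat \<Rightarrow> nat \<Rightarrow> (nat \<Rightarrow> (real^'d) \<times> real) \<Rightarrow> (nat \<Rightarrow> (real^'d) \<times> real)
    \<Rightarrow> real^'d \<Rightarrow> nat \<Rightarrow> ((real^'d) \<times> (real^'d)) pmf" where
  "cpl \<eta> n b X Xh \<theta> 0 = return_pmf (\<theta>, \<theta>)"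
| "cpl \<eta> n b X Xh \<theta> (Suc k) = bind_pmf (cpl \<eta> n b X Xh \<theta> k)
     (\<lambda>p. map_pmf (\<lambda>S. (sgd_step \<eta> b X S (fst p), sgd_step \<eta> b Xh S (snd p))) (pmf_of_set (batches n b)))"

lemma cpl_fst: "map_pmf fst (cpl \<eta> n b X Xh \<theta> k) = sgd_law \<eta> n b X \<theta> k"
proof (induction k)
  case (Suc k)
  show ?case by (simp add: map_bind_pmf bind_map_pmf pmf.map_comp o_def flip: Suc.IH)
qed simp

lemma cpl_snd: "map_pmf snd (cpl \<eta> n b X Xh \<theta> k) = sgd_law \<eta> n b Xh \<theta> k"
proof (induction k)
  case (Suc k)
  show ?case by (simp add: map_bind_pmf bind_map_pmf pmf.map_comp o_def flip: Suc.IH)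
qed simp

lemma cpl_finite: "b \<le> n \<Longrightarrow> finite (set_pmf (cpl \<eta> n b X Xh \<theta> k))"
  by (induction k) (simp_all add: batches_finite batches_ne)

theorem theorem3p1:
  fixes \<eta> D \<rho> \<rho>h :: real and n b k :: nat
    and X Xh :: "nat \<Rightarrow> (real^'d) \<times> real"
    and \<X> :: "((real^'d) \<times> real) set" and \<theta> :: "real^'d"
  assumes "\<eta> > 0" and "n \<ge> 1" and "1 \<le> b" and "b \<le> n"
    and "card {i \<in> {..<n}. X i \<noteq> Xh i} \<le> 1"
    and "\<forall>i<n. X i \<in> \<X> \<and> Xh i \<in> \<X>"
    and "\<forall>x\<in>\<X>. norm x \<le> D"
    and "\<rho> = measure_pmf.expectation (pmf_of_set (batches n b))
               (\<lambda>S. onorm (\<lambda>v. (mat 1 - (\<eta> / real b) *\<^sub>R Hmat X S) *v v))"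
    and "\<rho>h = measure_pmf.expectation (pmf_of_set (batches n b))
               (\<lambda>S. onorm (\<lambda>v. (mat 1 - (\<eta> / real b) *\<^sub>R Hmat Xh S) *v v))"
    and "\<rho> < 1" and "\<rho>h < 1"
  shows "wasserstein1 (sgd_law \<eta> n b X \<theta> k) (sgd_law \<eta> n b Xh \<theta> k)
    \<le> (1 - \<rho> ^ k) / (1 - \<rho>) * (2 * \<eta> * D\<^sup>2 / real n) *
       max (1 + norm \<theta>)
           ((1 - \<rho>h + \<eta> / real b *
               measure_pmf.expectation (pmf_of_set (batches n b)) (\<lambda>S. norm (qvec Xh S)))
            / (1 - \<rho>h))"
proof -
  let ?B = "pmf_of_set (batches n b)"
  let ?C = "cpl \<eta> n b X Xh \<theta>"
  define Q where "Q = measure_pmf.expectation ?B (\<lambda>S. norm (qvec Xh S))"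
  define M where "M = max (1 + norm \<theta>) ((1 - \<rho>h + \<eta> / real b * Q) / (1 - \<rho>h))"
  define K where "K = 2 * \<eta> * D\<^sup>2 / real n"
  define E where "E j = measure_pmf.expectation (?C j) (\<lambda>(x, y). dist x y)" for j
  define F where "F j = measure_pmf.expectation (?C j) (\<lambda>p. norm (snd p))" for j
  have bn: "b \<le> n" by fact
  have bnd: "\<forall>i<n. norm (X i) \<le> D \<and> norm (Xh i) \<le> D" using assms(6,7) by blast
  have \<rho>0: "\<rho> \<ge> 0" unfolding assms(8) by (rule Bochner_Integration.integral_nonneg) (simp add: onorm_pos_le)
  have \<rho>h0: "\<rho>h \<ge> 0" unfolding assms(9) by (rule Bochner_Integration.integral_nonneg) (simp add: onorm_pos_le)
  have K0: "K \<ge> 0" unfolding K_def using assms by simp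
  have finC: "finite (set_pmf (?C j))" for j by (rule cpl_finite[OF bn])
  have intC: "integrable (measure_pmf (?C j)) (f :: _ \<Rightarrow> real)" for j f
    by (rule integrable_measure_pmf_finite[OF finC])
  have finS: "\<And>x. x \<in> set_pmf (?C j) \<Longrightarrow> finite (set_pmf (map_pmf (\<lambda>S. (sgd_step \<eta> b X S (fst x), sgd_step \<eta> b Xh S (snd x))) ?B))" for j
    using fin_B[OF bn] by simp
  have Frec: "F (Suc j) \<le> \<rho>h * F j + \<eta> / real b * Q" for j
  proof -
    have "F (Suc j) = measure_pmf.expectation (?C j)
        (\<lambda>p. measure_pmf.expectation ?B (\<lambda>S. norm (sgd_step \<eta> b Xh S (snd p))))"
      unfolding F_def by (simp add: exp_bind[OF finC finS])
    also have "\<dots> \<le> measure_pmf.expectation (?C j) (\<lambda>p. \<rho>h * norm (snd p) + \<eta> / real b * Q)"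
      by (rule integral_mono[OF intC intC])
         (use step_norm_bound[OF assms(1,3,4)] in \<open>simp add: assms(9) Q_def mult.commute\<close>)
    also have "\<dots> = \<rho>h * F j + \<eta> / real b * Q"
      unfolding F_def by (simp add: Bochner_Integration.integral_add[OF intC intC])
    finally show ?thesis .
  qed
  have Fb: "1 + F j \<le> M" for j
  proof (induction j)
    case 0
    then show ?case by (simp add: F_def M_def)
  next
    case (Suc j)
    have "1 + F (Suc j) \<le> \<rho>h * (1 + F j) + ((1 - \<rho>h) + \<eta> / real b * Q)"
      using Frec[of j] by (simp add: algebra_simps)
    also have "\<dots> \<le> \<rho>h * M + (1 - \<rho>h) * M"
    proof (rule add_mono)
      show "\<rho>h * (1 + F j) \<le> \<rho>h * M" using Suc \<rho>h0 by (rule mult_left_mono)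
      have "(1 - \<rho>h + \<eta> / real b * Q) / (1 - \<rho>h) \<le> M" unfolding M_def by simp
      then show "1 - \<rho>h + \<eta> / real b * Q \<le> (1 - \<rho>h) * M"
        using assms(11) by (simp add: divide_le_eq mult.commute)
    qed
    also have "\<dots> = M" by (simp add: algebra_simps)
    finally show ?case .
  qed
  have Erec: "E (Suc j) \<le> \<rho> * E j + K * (1 + F j)" for j
  proof -
    have "E (Suc j) = measure_pmf.expectation (?C j)
        (\<lambda>p. measure_pmf.expectation ?B (\<lambda>S. dist (sgd_step \<eta> b X S (fst p)) (sgd_step \<eta> b Xh S (snd p))))"
      unfolding E_def by (simp add: exp_bind[OF finC finS])
    also have "\<dots> \<le> measure_pmf.expectation (?C j) (\<lambda>p. \<rho> * dist (fst p) (snd p) + K * (1 + norm (snd p)))"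
      by (rule integral_mono[OF intC intC])
         (use step_diff_bound[OF assms(1,3,4,5) bnd] in \<open>simp add: assms(8) K_def mult.commute dist_norm\<close>)
    also have "\<dots> = \<rho> * E j + K * (1 + F j)"
      unfolding E_def F_def
      by (simp add: Bochner_Integration.integral_add[OF intC intC] case_prod_unfold algebra_simps)
    finally show ?thesis .
  qed
  have Eb: "E j \<le> (1 - \<rho> ^ j) / (1 - \<rho>) * (K * M)" for j
  proof (induction j)
    case 0
    then show ?case by (simp add: E_def)
  next
    case (Suc j)
    have "E (Suc j) \<le> \<rho> * ((1 - \<rho> ^ j) / (1 - \<rho>) * (K * M)) + K * M"
      using Erec[of j] mult_left_mono[OF Suc \<rho>0] mult_left_mono[OF Fb[of j] K0] by linarith
    also have "\<dots> = (1 - \<rho> ^ Suc j) / (1 - \<rho>) * (K * M)"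
      using assms(10) by (simp add: field_simps)
    finally show ?case .
  qed
  have "wasserstein1 (sgd_law \<eta> n b X \<theta> k) (sgd_law \<eta> n b Xh \<theta> k) \<le> E k"
    unfolding wasserstein1_def E_def
  proof (rule cInf_lower)
    show "measure_pmf.expectation (?C k) (\<lambda>(x, y). dist x y) \<in>
      {measure_pmf.expectation c (\<lambda>(x, y). dist x y) | c.
        map_pmf fst c = sgd_law \<eta> n b X \<theta> k \<and> map_pmf snd c = sgd_law \<eta> n b Xh \<theta> k}"
      using cpl_fst cpl_snd by blast
    show "bdd_below {measure_pmf.expectation c (\<lambda>(x, y). dist x y) | c.
        map_pmf fst c = sgd_law \<eta> n b X \<theta> k \<and> map_pmf snd c = sgd_law \<eta> n b Xh \<theta> k}"
      by (rule bdd_belowI[of _ 0]) (auto intro!: Bochner_Integration.integral_nonneg simp: case_prod_beta)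
  qed
  also have "\<dots> \<le> (1 - \<rho> ^ k) / (1 - \<rho>) * (K * M)" by (rule Eb)
  finally show ?thesis by (simp add: K_def M_def Q_def mult.assoc)
qed

end
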